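(* There exists a constant $\widetilde c>0$ such that for all $N$ large enough, all $n\in\mathbb{Z}_+$ and every initial law of $X(0)$, a Markov chain $X$ on $\{0,\dots,N-4\}$ with kernel $\check P$ satisfies $$\mathbb{P}[\tau_0^X>n]\le e^{1-\widetilde c n/N^3},\qquad \tau_0^X=\inf\{n\in\mathbb{Z}_+: X(n)=0\}.$$
   Context: For $\sigma\in\mathcal{S}_N$ let $\eta_1(\sigma)$, $\eta_2(\sigma)$ be its numbers of fixed points and 2-cycles, $\nu$ the uniform measure on $\mathcal{S}_N$ and $p(x)=\mathbb{E}_\nu[\eta_2\mid\eta_1=x]$. $\check P$ is the birth–death Markov kernel on $\{0,\dots,N-4\}$ with $\check P(x,x-1)=\frac{x(N-x)}{N(N-1)}$, $\check P(x,x+1)=\frac{N-x-2p(x)}{N(N-1)}$ for $x\le N-5$, all other off-diagonal entries $0$, and diagonal entries making rows sum to 1. *)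

theory Defs
  imports "HOL-Probability.Probability" "HOL-Combinatorics.Permutations"
begin

definition perms :: "nat \<Rightarrow> (nat \<Rightarrow> nat) set" where
  "perms N = {\<sigma>. \<sigma> permutes {..<N}}"

definition eta1 :: "nat \<Rightarrow> (nat \<Rightarrow> nat) \<Rightarrow> nat" where
  "eta1 N \<sigma> = card {i \<in> {..<N}. \<sigma> i = i}"

definition eta2 :: "nat \<Rightarrow> (nat \<Rightarrow> nat) \<Rightarrow> nat" where
  "eta2 N \<sigma> = card {{i, j} | i j. i < N \<and> j < N \<and> i \<noteq> j \<and> \<sigma> i = j \<and> \<sigma> j = i}"

text \<open>p(x) = E_nu[eta2 | eta1 = x] for nu uniform on S_N
  (elementary conditional expectation; set to 0 if the conditioning event is empty).\<close>
definition pcond :: "nat \<Rightarrow> nat \<Rightarrow> real" where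
  "pcond N x = (let A = {\<sigma> \<in> perms N. eta1 N \<sigma> = x} in
      (\<Sum>\<sigma>\<in>A. real (eta2 N \<sigma>)) / real (card A))"

definition Pdown :: "nat \<Rightarrow> nat \<Rightarrow> real" where
  "Pdown N x = real x * real (N - x) / (real N * (real N - 1))"

definition Pup :: "nat \<Rightarrow> nat \<Rightarrow> real" where
  "Pup N x = (if x + 5 \<le> N then (real N - real x - 2 * pcond N x) / (real N * (real N - 1)) else 0)"

definition Pcheck :: "nat \<Rightarrow> nat \<Rightarrow> nat \<Rightarrow> real" where
  "Pcheck N x y =
     (if x \<le> N - 4 \<and> y \<le> N - 4 then
        (if 0 < x \<and> y = x - 1 then Pdown N x
         else if y = x + 1 then Pup N x
         else if y = x then 1 - (if 0 < x then Pdown N x else 0) - Pup N x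
         else 0)
      else 0)"

text \<open>surv N n x = P_x[X(0) \<noteq> 0, ..., X(n) \<noteq> 0] = P_x[tau_0 > n] for the chain with kernel Pcheck.\<close>
fun surv :: "nat \<Rightarrow> nat \<Rightarrow> nat \<Rightarrow> real" where
  "surv N 0 x = (if x = 0 then 0 else 1)"
| "surv N (Suc n) x = (if x = 0 then 0 else (\<Sum>y\<in>{0..N - 4}. Pcheck N x y * surv N n y))"

definition tail_prob :: "nat \<Rightarrow> nat pmf \<Rightarrow> nat \<Rightarrow> real" where
  "tail_prob N \<mu> n = (\<Sum>x\<in>{0..N - 4}. pmf \<mu> x * surv N n x)"

end

theory Submission
  imports Defs
begin

lemma eta2_bound: "2 * eta2 N \<sigma> + eta1 N \<sigma> \<le> N"
proof -
  define T where "T = {{i, j} | i j. i < N \<and> j < N \<and> i \<noteq> j \<and> \<sigma> i = j \<and> \<sigma> j = i}"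
  define F where "F = {i \<in> {..<N}. \<sigma> i = i}"
  have Tsub: "\<Union>T \<subseteq> {..<N} - F" unfolding T_def F_def by auto
  have Tcard: "\<And>P. P \<in> T \<Longrightarrow> card P = 2" unfolding T_def by auto
  have "T \<subseteq> Pow {..<N}" unfolding T_def by auto
  hence Tfin: "finite T" by (meson finite_Pow_iff finite_lessThan finite_subset)
  have disj: "pairwise disjnt T" unfolding pairwise_def disjnt_def T_def by auto
  have fin: "\<And>A. A \<in> T \<Longrightarrow> finite A" unfolding T_def by auto
  have "card (\<Union>T) = sum card T" by (rule card_Union_disjoint[OF disj fin])
  also have "\<dots> = 2 * card T" using Tcard by simp
  finally have c1: "card (\<Union>T) = 2 * card T" .
  have "card (\<Union>T) \<le> card ({..<N} - F)" by (rule card_mono) (use Tsub in auto)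
  also have "\<dots> = N - card F" by (subst card_Diff_subset) (auto simp: F_def)
  finally have "2 * card T \<le> N - card F" using c1 by simp
  moreover have "card F \<le> N" using card_mono[of "{..<N}" F] by (auto simp: F_def)
  ultimately show ?thesis unfolding eta2_def eta1_def T_def[symmetric] F_def[symmetric] by simp
qed

lemma pcond_nonneg: "pcond N x \<ge> 0"
  unfolding pcond_def Let_def by (auto intro!: sum_nonneg divide_nonneg_nonneg)

lemma pcond_le: assumes "x \<le> N" shows "2 * pcond N x \<le> real N - real x"
proof -
  define A where "A = {\<sigma> \<in> perms N. eta1 N \<sigma> = x}"
  have finA: "finite A" unfolding A_def perms_def
    by (rule finite_subset[OF _ finite_permutations[of "{..<N}"]]) auto
  show ?thesis
  proof (cases "A = {}")
    case True
    then show ?thesis using \<open>x \<le> N\<close> unfolding pcond_def Let_def A_def[symmetric] by simp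
  next
    case False
    then obtain \<sigma> where "\<sigma> \<in> A" by auto
    have "(\<Sum>\<sigma>\<in>A. real (eta2 N \<sigma>)) \<le> (\<Sum>\<sigma>\<in>A. (real N - real x) / 2)"
    proof (rule sum_mono)
      fix s assume "s \<in> A"
      hence "2 * eta2 N s + x \<le> N" using eta2_bound[of N s] by (auto simp: A_def)
      hence "2 * real (eta2 N s) + real x \<le> real N" by linarith
      thus "real (eta2 N s) \<le> (real N - real x) / 2" by simp
    qed
    also have "\<dots> = real (card A) * (real N - real x) / 2" by simp
    finally have "(\<Sum>\<sigma>\<in>A. real (eta2 N \<sigma>)) / real (card A) \<le> (real N - real x) / 2"
      using False finA by (simp add: divide_le_eq card_gt_0_iff mult.commute)
    thus ?thesis unfolding pcond_def Let_def A_def[symmetric] by (simp add: ac_simps)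
  qed
qed

lemma Pcheck_split:
  assumes "1 \<le> x" "x \<le> N - 4" "y \<le> N - 4"
  shows "Pcheck N x y = (if y = x - 1 then Pdown N x else 0)
     + (if y = x then 1 - Pdown N x - Pup N x else 0) + (if y = x + 1 then Pup N x else 0)"
  using assms unfolding Pcheck_def by auto

lemma Pcheck_sum:
  assumes "1 \<le> x" "x \<le> N - 4" "N \<ge> 10"
  shows "(\<Sum>y\<in>{0..N - 4}. Pcheck N x y * f y) =
     Pdown N x * f (x - 1) + (1 - Pdown N x - Pup N x) * f x + Pup N x * f (x + 1)"
proof -
  have "(\<Sum>y\<in>{0..N - 4}. Pcheck N x y * f y) =
     (\<Sum>y\<in>{0..N - 4}. (if y = x - 1 then Pdown N x * f y else 0)
     + (if y = x then (1 - Pdown N x - Pup N x) * f y else 0) + (if y = x + 1 then Pup N x * f y else 0))"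
    by (rule sum.cong) (use assms in \<open>auto simp: Pcheck_split\<close>)
  also have "\<dots> = Pdown N x * f (x - 1) + (1 - Pdown N x - Pup N x) * f x
      + (if x + 1 \<le> N - 4 then Pup N x * f (x + 1) else 0)"
    using assms by (simp add: sum.distrib)
  also have "\<dots> = Pdown N x * f (x - 1) + (1 - Pdown N x - Pup N x) * f x + Pup N x * f (x + 1)"
    using assms by (auto simp: Pup_def)
  finally show ?thesis .
qed

lemma rates:
  assumes "1 \<le> x" "x \<le> N - 4" "N \<ge> 10"
  shows "Pdown N x \<ge> 1 / real N" "Pup N x \<ge> 0" "Pup N x \<le> Pdown N x"
    "1 - Pdown N x - Pup N x \<ge> 0" "x + 5 > N \<Longrightarrow> Pup N x = 0"
proof -
  have xN: "real x + 4 \<le> real N" using assms by linarith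
  have x1: "real x \<ge> 1" using assms by simp
  have NN: "real N * (real N - 1) > 0" using assms by simp
  have rNx: "real (N - x) = real N - real x" using assms by simp
  have "real x * (real N - real x) - (real N - 1) = (real x - 1) * (real N - real x - 1)"
    by (simp add: algebra_simps)
  also have "\<dots> \<ge> 0" using xN x1 by simp
  finally have a: "real x * (real N - real x) \<ge> real N - 1" by simp
  have "1 / real N = (real N - 1) / (real N * (real N - 1))" using assms by simp
  also have "\<dots> \<le> Pdown N x" unfolding Pdown_def rNx
    by (rule divide_right_mono) (use a NN in auto)
  finally show "Pdown N x \<ge> 1 / real N" .
  have p0: "pcond N x \<ge> 0" by (rule pcond_nonneg)
  have p1: "2 * pcond N x \<le> real N - real x" by (rule pcond_le) (use assms in auto)
  show "Pup N x \<ge> 0" unfolding Pup_def using p1 NN by auto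
  have b: "real N - real x \<le> real x * (real N - real x)" using xN x1
    using mult_right_mono[of 1 "real x" "real N - real x"] by simp
  have u: "Pup N x \<le> (real N - real x) / (real N * (real N - 1))" unfolding Pup_def
    using p0 NN xN by (auto intro!: divide_right_mono)
  also have "\<dots> \<le> Pdown N x" unfolding Pdown_def rNx using b NN by (auto intro!: divide_right_mono)
  finally show "Pup N x \<le> Pdown N x" .
  have "real x * (real N - real x) + (real N - real x) = (real x + 1) * (real N - real x)"
    by (simp add: algebra_simps)
  also have "\<dots> \<le> real N * (real N - 1)" using xN x1
    by (intro mult_mono) auto
  finally have c: "real x * (real N - real x) + (real N - real x) \<le> real N * (real N - 1)" .
  have "Pdown N x + Pup N x \<le> (real x * (real N - real x) + (real N - real x)) / (real N * (real N - 1))"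
    using u unfolding Pdown_def rNx by (simp add: add_divide_distrib)
  also have "\<dots> \<le> 1" using c NN by simp
  finally show "1 - Pdown N x - Pup N x \<ge> 0" by simp
  show "x + 5 > N \<Longrightarrow> Pup N x = 0" unfolding Pup_def by simp
qed

definition Gf :: "nat \<Rightarrow> nat \<Rightarrow> real" where
  "Gf N y = (if y = 0 then 0 else 1 + real y * (2 * real N - real y) / real N ^ 2)"

lemma Gf_bounds:
  assumes "1 \<le> y" "y \<le> N"
  shows "1 \<le> Gf N y" "Gf N y \<le> 2"
proof -
  have N0: "real N > 0" using assms by simp
  have "real y * (2 * real N - real y) \<ge> 0" using assms by simp
  thus "1 \<le> Gf N y" using assms by (simp add: Gf_def)
  have "real N ^ 2 - real y * (2 * real N - real y) = (real N - real y)^2"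
    by (simp add: power2_eq_square algebra_simps)
  hence "real y * (2 * real N - real y) \<le> real N ^ 2" by (metis diff_ge_0_iff_ge zero_le_power2)
  hence "real y * (2 * real N - real y) / real N ^ 2 \<le> 1" using N0 by simp
  thus "Gf N y \<le> 2" using assms by (simp add: Gf_def)
qed

lemma Gf_up:
  assumes "1 \<le> x" "N \<ge> 10"
  shows "Gf N (x + 1) - Gf N x = (2 * real N - 2 * real x - 1) / real N ^ 2"
  using assms by (simp add: Gf_def field_simps power2_eq_square) 

lemma Gf_down:
  assumes "2 \<le> x" "N \<ge> 10"
  shows "Gf N (x - 1) - Gf N x = - (2 * real N - 2 * real x + 1) / real N ^ 2"
proof -
  have "real (x - 1) = real x - 1" using assms by simp
  thus ?thesis using assms by (simp add: Gf_def field_simps power2_eq_square)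
qed

lemma drift:
  assumes x1: "1 \<le> x" and xN: "x \<le> N - 4" and N10: "N \<ge> 10"
  shows "(\<Sum>y\<in>{0..N - 4}. Pcheck N x y * Gf N y) \<le> (1 - 1 / real N ^ 3) * Gf N x"
proof -
  define d where "d = Pdown N x"
  define u where "u = Pup N x"
  have d1: "d \<ge> 1 / real N" and u0: "u \<ge> 0" and ud: "u \<le> d"
    using rates[OF x1 xN N10] by (auto simp: d_def u_def)
  have N0: "real N > 0" using N10 by simp
  have xr: "real x + 4 \<le> real N" using xN N10 by linarith
  have key: "u * (Gf N (x + 1) - Gf N x) + d * (Gf N (x - 1) - Gf N x) \<le> - 2 * d / real N ^ 2"
  proof (cases "x + 5 \<le> N")
    case False
    hence "u = 0" using rates[OF x1 xN N10] by (auto simp: u_def)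
    moreover have "x = N - 4" using False xN by simp
    moreover hence "real x = real N - 4" using N10 by simp
    moreover have "2 \<le> x" using N10 \<open>x = N - 4\<close> by simp
    ultimately have e: "u * (Gf N (x + 1) - Gf N x) + d * (Gf N (x - 1) - Gf N x) = - 9 * d / real N ^ 2"
      using Gf_down[of x N] N10 by simp
    have "d \<ge> 0" using u0 ud by simp
    thus ?thesis unfolding e using N0 by (simp add: divide_right_mono)
  next
    case True
    have up: "Gf N (x + 1) - Gf N x \<ge> 0" using Gf_up[OF x1 N10] xr True N0 by simp
    hence a: "u * (Gf N (x + 1) - Gf N x) \<le> d * (Gf N (x + 1) - Gf N x)"
      using ud by (simp add: mult_right_mono)
    show ?thesis
    proof (cases "x = 1")
      case True
      have "d * (Gf N (x + 1) - Gf N x) + d * (Gf N (x - 1) - Gf N x)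
          = d * ((2 * real N - 3) / real N ^ 2 - (1 + (2 * real N - 1) / real N ^ 2))"
        using True Gf_up[OF x1 N10] by (simp add: Gf_def algebra_simps)
      also have "\<dots> = d * (- 1 - 2 / real N ^ 2)" using N0 by (simp add: field_simps)
      also have "\<dots> \<le> - 2 * d / real N ^ 2" using u0 ud by (simp add: algebra_simps)
      finally show ?thesis using a by simp
    next
      case False
      hence "2 \<le> x" using x1 by simp
      have "d * (Gf N (x + 1) - Gf N x) + d * (Gf N (x - 1) - Gf N x) = - 2 * d / real N ^ 2"
      proof -
        have "(Gf N (x + 1) - Gf N x) + (Gf N (x - 1) - Gf N x) = - 2 / real N ^ 2"
          unfolding Gf_up[OF x1 N10] Gf_down[OF \<open>2 \<le> x\<close> N10] using N0
          by (simp add: field_simps)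
        hence "d * (Gf N (x + 1) - Gf N x) + d * (Gf N (x - 1) - Gf N x) = d * (- 2 / real N ^ 2)"
          by (metis distrib_left)
        thus ?thesis by simp
      qed
      thus ?thesis using a by simp
    qed
  qed
  have "- 2 * d / real N ^ 2 \<le> - 2 * (1 / real N) / real N ^ 2"
  proof -
    have "2 * (1 / real N) / real N ^ 2 \<le> 2 * d / real N ^ 2"
      using d1 N0 by (intro divide_right_mono mult_left_mono) auto
    thus ?thesis by simp
  qed
  also have "\<dots> = - 2 / real N ^ 3" by (simp add: power3_eq_cube power2_eq_square)
  also have "\<dots> \<le> - Gf N x / real N ^ 3" using Gf_bounds[of x N] x1 xr N0 by (simp add: divide_right_mono)
  finally have k2: "u * (Gf N (x + 1) - Gf N x) + d * (Gf N (x - 1) - Gf N x) \<le> - Gf N x / real N ^ 3"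
    using key by linarith
  have "(\<Sum>y\<in>{0..N - 4}. Pcheck N x y * Gf N y) = d * Gf N (x - 1) + (1 - d - u) * Gf N x + u * Gf N (x + 1)"
    unfolding d_def u_def by (rule Pcheck_sum[OF x1 xN N10])
  also have "\<dots> = Gf N x + (u * (Gf N (x + 1) - Gf N x) + d * (Gf N (x - 1) - Gf N x))"
    by (simp add: algebra_simps)
  also have "\<dots> \<le> Gf N x - Gf N x / real N ^ 3" using k2 by simp
  also have "\<dots> = (1 - 1 / real N ^ 3) * Gf N x" by (simp add: algebra_simps)
  finally show ?thesis .
qed

lemma Pcheck_nonneg:
  assumes "1 \<le> x" "x \<le> N - 4" "N \<ge> 10"
  shows "Pcheck N x y \<ge> 0"
proof (cases "y \<le> N - 4")
  case True
  show ?thesis unfolding Pcheck_split[OF assms(1,2) True]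
    using rates[OF assms] by auto
next
  case False
  thus ?thesis by (simp add: Pcheck_def)
qed

lemma surv_bound:
  assumes N10: "N \<ge> 10"
  shows "x \<le> N - 4 \<Longrightarrow> surv N n x \<le> (1 - 1 / real N ^ 3) ^ n * Gf N x"
proof (induction n arbitrary: x)
  case 0
  then show ?case using Gf_bounds[of x N] by (auto simp: Gf_def)
next
  case (Suc n)
  have N0: "real N \<ge> 1" using N10 by simp
  hence "1 / real N ^ 3 \<le> 1" by simp
  hence l0: "0 \<le> (1 - 1 / real N ^ 3) ^ n" by simp
  show ?case
  proof (cases "x = 0")
    case True
    then show ?thesis by (simp add: Gf_def)
  next
    case False
    hence x1: "1 \<le> x" by simp
    have "surv N (Suc n) x = (\<Sum>y\<in>{0..N - 4}. Pcheck N x y * surv N n y)"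
      using False by simp
    also have "\<dots> \<le> (\<Sum>y\<in>{0..N - 4}. Pcheck N x y * ((1 - 1 / real N ^ 3) ^ n * Gf N y))"
      by (rule sum_mono, rule mult_left_mono)
        (use Suc.IH Pcheck_nonneg[OF x1 Suc.prems N10] in auto)
    also have "\<dots> = (1 - 1 / real N ^ 3) ^ n * (\<Sum>y\<in>{0..N - 4}. Pcheck N x y * Gf N y)"
      by (simp add: sum_distrib_left algebra_simps)
    also have "\<dots> \<le> (1 - 1 / real N ^ 3) ^ n * ((1 - 1 / real N ^ 3) * Gf N x)"
      by (rule mult_left_mono[OF drift[OF x1 Suc.prems N10] l0])
    finally show ?thesis by (simp add: ac_simps)
  qed
qed

theorem lemma5p8:
  shows "\<exists>c::real. c > 0 \<and> (\<exists>N0::nat. \<forall>N\<ge>N0. \<forall>n::nat. \<forall>\<mu>::nat pmf.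
           set_pmf \<mu> \<subseteq> {0..N - 4} \<longrightarrow>
           tail_prob N \<mu> n \<le> exp (1 - c * real n / real N ^ 3))"
proof -
  have "\<forall>N\<ge>10. \<forall>n::nat. \<forall>\<mu>::nat pmf.
           set_pmf \<mu> \<subseteq> {0..N - 4} \<longrightarrow>
           tail_prob N \<mu> n \<le> exp (1 - 1 * real n / real N ^ 3)"
  proof (intro allI impI)
  fix N n and \<mu> :: "nat pmf"
  assume N10: "10 \<le> N" and sub: "set_pmf \<mu> \<subseteq> {0..N - 4}"
  define l where "l = 1 - 1 / real N ^ 3"
  have N1: "real N \<ge> 1" using N10 by simp
  hence l0: "0 \<le> l" unfolding l_def by simp
  have lexp: "l \<le> exp (- (1 / real N ^ 3))" unfolding l_def
    using exp_ge_add_one_self[of "- (1 / real N ^ 3)"] by simp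
  have "l ^ n \<le> exp (- (1 / real N ^ 3)) ^ n" by (rule power_mono[OF lexp l0])
  also have "\<dots> = exp (- (real n / real N ^ 3))" by (simp add: exp_of_nat_mult[symmetric])
  finally have ln: "l ^ n \<le> exp (- (real n / real N ^ 3))" .
  have e2: "2 \<le> exp (1::real)" using exp_ge_add_one_self[of "1::real"] by simp
  have sb: "\<And>x. x \<in> {0..N-4} \<Longrightarrow> surv N n x \<le> 2 * l ^ n"
  proof -
    fix x assume "x \<in> {0..N-4}"
    hence "surv N n x \<le> l ^ n * Gf N x" using surv_bound[OF N10] unfolding l_def by auto
    also have "\<dots> \<le> l ^ n * 2"
      using Gf_bounds[of x N] \<open>x \<in> {0..N-4}\<close> l0 by (cases "x = 0") (auto simp: Gf_def intro: mult_left_mono)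
    finally show "surv N n x \<le> 2 * l ^ n" by simp
  qed
  have "tail_prob N \<mu> n \<le> (\<Sum>x\<in>{0..N - 4}. pmf \<mu> x * (2 * l ^ n))"
    unfolding tail_prob_def by (rule sum_mono, rule mult_left_mono) (auto simp: sb)
  also have "\<dots> = 2 * l ^ n * (\<Sum>x\<in>{0..N - 4}. pmf \<mu> x)" by (simp add: sum_distrib_left algebra_simps)
  also have "\<dots> = 2 * l ^ n" using sum_pmf_eq_1[OF _ sub] by simp
  also have "\<dots> \<le> exp 1 * exp (- (real n / real N ^ 3))"
    by (rule mult_mono[OF e2 ln]) (use l0 in auto)
  also have "\<dots> = exp (1 - 1 * real n / real N ^ 3)" by (simp add: exp_add[symmetric])
  finally have "tail_prob N \<mu> n \<le> exp (1 - 1 * real n / real N ^ 3)" .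
  thus "tail_prob N \<mu> n \<le> exp (1 - 1 * real n / real N ^ 3)" by simp
  qed
  thus ?thesis by (intro exI[of _ 1] conjI exI[of _ 10]) auto
qed

end
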